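(* Let $\mathcal{N}[\phi]=\sup_{\mu\in\Theta}\mu[\phi]$ be a sublinear expectation on $C_{b,Lip}(\mathbb{R})$ satisfying condition (H) below, and set $\underline{\mu}=-\mathcal{N}[-x]$, $\overline{\mu}=\mathcal{N}[x]$, $p(a)=\sup_{y\in[\underline{\mu},\overline{\mu}]}(ya)$, $a\in\mathbb{R}$. Then $\mathcal{N}[\phi]=\sup_{y\in[\underline{\mu},\overline{\mu}]}\phi(y)$ for all $\phi\in C_{b,Lip}(\mathbb{R})$ if and only if for every $\varphi\in C_b^1(\mathbb{R})$ and every $\mu\in\Theta_\varphi$, $$E_\mu[p(\varphi'(\xi))-\xi\varphi'(\xi)]=0.$$
   Context: $C_{b,Lip}(\mathbb{R})$ is the space of bounded Lipschitz functions and $C_b^1(\mathbb{R})$ the bounded $C^1$ functions with bounded derivative. A sublinear expectation on $C_{b,Lip}(\mathbb{R})$ is a monotone, positively homogeneous, constant-preserving, subadditive functional continuous from above along sequences decreasing to $0$; it is represented as $\mathcal{N}[\varphi]=\sup_{\mu\in\Theta}\mu[\varphi]$ for a weakly compact set $\Theta$ of Borel probability measures on $\mathbb{R}$, and extended to other measurable functions (e.g. $x\mapsto x$) by the same supremum. Condition (H): $\lim_{N\to\infty}\mathcal{N}[|x|1_{[|x|>N]}]=0$. Notation: $\xi(x)=x$, $E_\mu[\varphi(\xi)]=\int\varphi\,d\mu$, $\Theta_\varphi=\{\mu\in\Theta:E_\mu[\varphi(\xi)]=\mathcal{N}[\varphi]\}$. *)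

theory Defs
  imports "HOL-Probability.Probability"
begin

definition weak_conv_bc :: "(nat \<Rightarrow> real measure) \<Rightarrow> real measure \<Rightarrow> bool" where
  "weak_conv_bc M_seq M \<longleftrightarrow>
     (\<forall>f :: real \<Rightarrow> real. continuous_on UNIV f \<longrightarrow> bounded (range f) \<longrightarrow>
        ((\<lambda>n. integral\<^sup>L (M_seq n) f) \<longlonglongrightarrow> integral\<^sup>L M f))"

text \<open>A weakly compact set of Borel probability measures on the real line
  (sequential compactness w.r.t. weak convergence; the weak topology on
  probability measures on a Polish space is metrizable).\<close>
definition weakly_compact_prob_set :: "real measure set \<Rightarrow> bool" where
  "weakly_compact_prob_set Th \<longleftrightarrow>
     (\<forall>\<mu>\<in>Th. prob_space \<mu> \<and> sets \<mu> = sets borel) \<and>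
     (\<forall>M_seq :: nat \<Rightarrow> real measure. (\<forall>n. M_seq n \<in> Th) \<longrightarrow>
        (\<exists>(r::nat\<Rightarrow>nat) \<mu>. strict_mono r \<and> \<mu> \<in> Th \<and> weak_conv_bc (M_seq \<circ> r) \<mu>))"

definition NE :: "real measure set \<Rightarrow> (real \<Rightarrow> real) \<Rightarrow> real" where
  "NE Th \<phi> = (SUP \<mu>\<in>Th. integral\<^sup>L \<mu> \<phi>)"

text \<open>Condition (H), with the (nonnegative) expectations taken in extended reals.\<close>
definition condH :: "real measure set \<Rightarrow> bool" where
  "condH Th \<longleftrightarrow>
     ((\<lambda>N::real. SUP \<mu>\<in>Th. \<integral>\<^sup>+ x. ennreal (\<bar>x\<bar> * indicator {x. \<bar>x\<bar> > N} x) \<partial>\<mu>)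
        \<longlongrightarrow> 0) at_top"

definition C_b_Lip :: "(real \<Rightarrow> real) set" where
  "C_b_Lip = {\<phi>. bounded (range \<phi>) \<and> (\<exists>L. L-lipschitz_on UNIV \<phi>)}"

definition C_b_1 :: "(real \<Rightarrow> real) set" where
  "C_b_1 = {\<phi>. (\<forall>x. \<phi> differentiable at x) \<and> continuous_on UNIV (deriv \<phi>)
              \<and> bounded (range \<phi>) \<and> bounded (range (deriv \<phi>))}"

definition Theta_opt :: "real measure set \<Rightarrow> (real \<Rightarrow> real) \<Rightarrow> real measure set" where
  "Theta_opt Th \<phi> = {\<mu>\<in>Th. integral\<^sup>L \<mu> \<phi> = NE Th \<phi>}"

end

theory Submission
  imports Defs
begin


lemma q_deriv: "((\<lambda>s::real. (max 0 s)^2) has_real_derivative 2 * max 0 s) (at s)"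
proof (cases "s = 0")
  case True
  have "((\<lambda>y. ((max 0 y)^2 - (max 0 s)^2) / (y - s)) \<longlongrightarrow> 0) (at s)"
  proof (rule Lim_null_comparison)
    show "\<forall>\<^sub>F x in at s. norm (((max 0 x)^2 - (max 0 s)^2) / (x - s)) \<le> \<bar>x\<bar>"
    proof (rule always_eventually, rule allI)
      fix x :: real
      have "norm (((max 0 x)^2 - (max 0 s)^2) / (x - s)) = (max 0 x)^2 / \<bar>x\<bar>"
        using True by (simp add: abs_divide)
      also have "\<dots> \<le> \<bar>x\<bar>"
      proof (cases "x > 0")
        case True
        then show ?thesis by (simp add: power2_eq_square)
      next
        case False
        then show ?thesis by simp
      qed
      finally show "norm (((max 0 x)^2 - (max 0 s)^2) / (x - s)) \<le> \<bar>x\<bar>" .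
    qed
    show "((\<lambda>x. \<bar>x\<bar>) \<longlongrightarrow> 0) (at s)" using True
      using tendsto_rabs[OF tendsto_ident_at[of s UNIV]] by simp
  qed
  then show ?thesis using True by (simp add: has_field_derivative_iff)
next
  case False
  show ?thesis
  proof (cases "s > 0")
    case True
    have "((\<lambda>s::real. s^2) has_real_derivative 2 * max 0 s) (at s)"
      using True by (auto intro!: derivative_eq_intros)
    then show ?thesis
      apply (rule has_field_derivative_transform_within_open[where S="{0<..}"])
      using True by auto
  next
    case f2: False
    have "((\<lambda>s::real. 0) has_real_derivative 2 * max 0 s) (at s)"
      using f2 False by (auto intro!: derivative_eq_intros)
    then show ?thesis
      apply (rule has_field_derivative_transform_within_open[where S="{..<0}"])
      using f2 False by auto
  qed
qed

definition psi :: "real \<Rightarrow> real" where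
  "psi s = (max 0 s)^2 / (1 + (max 0 s)^2)"

definition dpsi :: "real \<Rightarrow> real" where
  "dpsi s = 2 * max 0 s / (1 + (max 0 s)^2)^2"

lemma psi_deriv: "(psi has_real_derivative dpsi s) (at s)"
proof -
  have d: "(psi has_real_derivative
     ((2 * max 0 s) * (1 + (max 0 s)^2) - (max 0 s)^2 * (2 * max 0 s)) / ((1 + (max 0 s)^2) * (1 + (max 0 s)^2))) (at s)"
    unfolding psi_def
    apply (rule DERIV_divide)
      apply (rule q_deriv)
     apply (rule DERIV_add[where D=0, simplified]) apply simp
     apply (rule q_deriv)
    by (smt (verit) zero_le_power2)
  have "((2 * max 0 s) * (1 + (max 0 s)^2) - (max 0 s)^2 * (2 * max 0 s)) / ((1 + (max 0 s)^2) * (1 + (max 0 s)^2)) = dpsi s"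
    unfolding dpsi_def by (simp add: algebra_simps power2_eq_square)
  with d show ?thesis by simp
qed



lemma wc_prob: "weakly_compact_prob_set Th \<Longrightarrow> \<mu> \<in> Th \<Longrightarrow> prob_space \<mu>"
  by (auto simp: weakly_compact_prob_set_def)

lemma wc_sets: "weakly_compact_prob_set Th \<Longrightarrow> \<mu> \<in> Th \<Longrightarrow> sets \<mu> = sets borel"
  by (auto simp: weakly_compact_prob_set_def)

lemma wc_meas: "weakly_compact_prob_set Th \<Longrightarrow> \<mu> \<in> Th \<Longrightarrow> continuous_on UNIV f
   \<Longrightarrow> f \<in> borel_measurable \<mu>"
  using measurable_cong_sets[OF wc_sets[of Th \<mu>] refl, of borel] borel_measurable_continuous_onI[of f]
  by auto

lemma wc_int_bound:
  fixes f :: "real \<Rightarrow> real"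
  assumes "weakly_compact_prob_set Th" "\<mu> \<in> Th" "continuous_on UNIV f" "\<And>x. \<bar>f x\<bar> \<le> K"
  shows "integrable \<mu> f" "\<bar>integral\<^sup>L \<mu> f\<bar> \<le> K"
proof -
  interpret prob_space \<mu> using wc_prob assms by blast
  have m: "f \<in> borel_measurable \<mu>" using wc_meas assms by blast
  show i: "integrable \<mu> f"
    by (rule integrable_const_bound[where B=K]) (use assms m in auto)
  have "\<bar>integral\<^sup>L \<mu> f\<bar> \<le> integral\<^sup>L \<mu> (\<lambda>x. \<bar>f x\<bar>)" by (rule integral_abs_bound)
  also have "\<dots> \<le> integral\<^sup>L \<mu> (\<lambda>x. K)"
    by (rule integral_mono) (use assms i in auto)
  also have "\<dots> = K" by (simp add: prob_space)
  finally show "\<bar>integral\<^sup>L \<mu> f\<bar> \<le> K" .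
qed

lemma wc_bdd:
  fixes f :: "real \<Rightarrow> real"
  assumes "weakly_compact_prob_set Th" "continuous_on UNIV f" "\<And>x. \<bar>f x\<bar> \<le> K"
  shows "bdd_above ((\<lambda>\<mu>. integral\<^sup>L \<mu> f) ` Th)"
  using wc_int_bound(2)[OF assms(1) _ assms(2,3)]
  by (intro bdd_aboveI[where M=K]) (auto dest: abs_le_D1)

lemma wc_NE_ge:
  fixes f :: "real \<Rightarrow> real"
  assumes "weakly_compact_prob_set Th" "continuous_on UNIV f" "\<And>x. \<bar>f x\<bar> \<le> K" "\<mu> \<in> Th"
  shows "integral\<^sup>L \<mu> f \<le> NE Th f"
  unfolding NE_def by (rule cSUP_upper[OF assms(4) wc_bdd[OF assms(1-3)]])

lemma wc_max:
  fixes f :: "real \<Rightarrow> real"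
  assumes ne: "Th \<noteq> {}" and wc: "weakly_compact_prob_set Th"
    and c: "continuous_on UNIV f" and K: "\<And>x. \<bar>f x\<bar> \<le> K"
  shows "\<exists>\<mu>\<in>Th. integral\<^sup>L \<mu> f = NE Th f"
proof -
  define S where "S = NE Th f"
  have bdd: "bdd_above ((\<lambda>\<mu>. integral\<^sup>L \<mu> f) ` Th)" using wc_bdd[OF wc c K] .
  have "\<forall>n::nat. \<exists>\<mu>\<in>Th. S - inverse (real (Suc n)) < integral\<^sup>L \<mu> f"
  proof
    fix n :: nat
    have "S - inverse (real (Suc n)) < S" by simp
    then show "\<exists>\<mu>\<in>Th. S - inverse (real (Suc n)) < integral\<^sup>L \<mu> f"
      unfolding S_def NE_def using less_cSUP_iff[OF ne bdd] by blast
  qed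
  then obtain M where M: "\<And>n. M n \<in> Th" "\<And>n. S - inverse (real (Suc n)) < integral\<^sup>L (M n) f"
    by metis
  obtain r \<mu> where r: "strict_mono r" "\<mu> \<in> Th" "weak_conv_bc (M \<circ> r) \<mu>"
    using wc M(1) unfolding weakly_compact_prob_set_def by meson
  have bf: "bounded (range f)"
    using K unfolding bounded_iff by auto
  have l1: "(\<lambda>n. integral\<^sup>L (M (r n)) f) \<longlonglongrightarrow> integral\<^sup>L \<mu> f"
    using r(3) c bf unfolding weak_conv_bc_def by auto
  have l2: "(\<lambda>n. integral\<^sup>L (M (r n)) f) \<longlonglongrightarrow> S"
  proof (rule tendsto_sandwich[where f="\<lambda>n. S - inverse (real (Suc (r n)))" and h="\<lambda>n. S"])
    show "\<forall>\<^sub>F n in sequentially. S - inverse (real (Suc (r n))) \<le> integral\<^sup>L (M (r n)) f"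
      by (intro always_eventually allI less_imp_le M(2))
    show "\<forall>\<^sub>F n in sequentially. integral\<^sup>L (M (r n)) f \<le> S"
      unfolding S_def using wc_NE_ge[OF wc c K M(1)] by auto
    show "(\<lambda>n. S) \<longlonglongrightarrow> S" by simp
    have "(\<lambda>n. inverse (real (Suc (r n)))) \<longlonglongrightarrow> 0"
      using LIMSEQ_subseq_LIMSEQ[OF LIMSEQ_inverse_real_of_nat r(1)] by (simp add: o_def)
    then show "(\<lambda>n. S - inverse (real (Suc (r n)))) \<longlonglongrightarrow> S"
      using tendsto_diff[OF tendsto_const[of S]] by fastforce
  qed
  have "integral\<^sup>L \<mu> f = S" using LIMSEQ_unique[OF l1 l2] .
  then show ?thesis using r(2) S_def by blast
qed



lemma condH_bound:
  assumes wc: "weakly_compact_prob_set Th" and H: "condH Th"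
  shows "\<exists>B. \<forall>\<mu>\<in>Th. integrable \<mu> (\<lambda>x. x) \<and> integral\<^sup>L \<mu> (\<lambda>x. \<bar>x\<bar>) \<le> B"
proof -
  let ?G = "\<lambda>N::real. SUP \<mu>\<in>Th. \<integral>\<^sup>+ x. ennreal (\<bar>x\<bar> * indicator {x. \<bar>x\<bar> > N} x) \<partial>\<mu>"
  have "eventually (\<lambda>N. ?G N < 1) at_top"
    using order_tendstoD(2)[OF H[unfolded condH_def], of 1] by simp
  then obtain N0 where N0: "\<And>N. N \<ge> N0 \<Longrightarrow> ?G N < 1"
    unfolding eventually_at_top_linorder by blast
  define N where "N = max N0 0"
  have GN: "?G N < 1" by (rule N0) (simp add: N_def)
  have N0': "N \<ge> 0" using N_def by simp
  have "\<forall>\<mu>\<in>Th. integrable \<mu> (\<lambda>x. x) \<and> integral\<^sup>L \<mu> (\<lambda>x. \<bar>x\<bar>) \<le> N + 1"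
  proof
    fix \<mu> assume mu: "\<mu> \<in> Th"
    interpret prob_space \<mu> using wc_prob[OF wc mu] .
    have sets: "sets \<mu> = sets borel" using wc_sets[OF wc mu] .
    have m1: "(\<lambda>x. ennreal (\<bar>x\<bar> * indicator {x. \<bar>x\<bar> > N} x)) \<in> borel_measurable borel"
      by measurable
    have m1': "(\<lambda>x. ennreal (\<bar>x\<bar> * indicator {x. \<bar>x\<bar> > N} x)) \<in> borel_measurable \<mu>"
      unfolding measurable_cong_sets[OF sets refl, of borel] by (rule m1)
    have m2: "(\<lambda>x::real. x) \<in> borel_measurable \<mu>"
      unfolding measurable_cong_sets[OF sets refl, of borel] by simp
    have le1: "(\<integral>\<^sup>+ x. ennreal (\<bar>x\<bar> * indicator {x. \<bar>x\<bar> > N} x) \<partial>\<mu>) \<le> ?G N"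
      by (rule SUP_upper[OF mu])
    have "(\<integral>\<^sup>+ x. ennreal (norm x) \<partial>\<mu>) \<le> (\<integral>\<^sup>+ x. ennreal N + ennreal (\<bar>x\<bar> * indicator {x. \<bar>x\<bar> > N} x) \<partial>\<mu>)"
    proof (rule nn_integral_mono)
      fix x :: real
      show "ennreal (norm x) \<le> ennreal N + ennreal (\<bar>x\<bar> * indicator {x. \<bar>x\<bar> > N} x)"
      proof (cases "\<bar>x\<bar> > N")
        case True
        then show ?thesis using N0' by (simp add: ennreal_plus[symmetric] del: ennreal_plus)
      next
        case False
        then show ?thesis by (simp add: ennreal_leI add_increasing2)
      qed
    qed
    also have "\<dots> = ennreal N + (\<integral>\<^sup>+ x. ennreal (\<bar>x\<bar> * indicator {x. \<bar>x\<bar> > N} x) \<partial>\<mu>)"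
      by (subst nn_integral_add) (use m1' in \<open>auto simp: emeasure_space_1\<close>)
    also have "\<dots> \<le> ennreal N + 1"
      using le1 GN by (intro add_left_mono) simp
    also have "\<dots> = ennreal (N + 1)" using N0' by (simp add: ennreal_plus)
    finally have fin: "(\<integral>\<^sup>+ x. ennreal (norm x) \<partial>\<mu>) \<le> ennreal (N + 1)" .
    have i: "integrable \<mu> (\<lambda>x. x)"
      by (rule integrableI_bounded[OF m2]) (use fin in \<open>auto simp: top_unique less_top[symmetric]\<close>)
    have "ennreal (integral\<^sup>L \<mu> (\<lambda>x. \<bar>x\<bar>)) = (\<integral>\<^sup>+ x. ennreal (norm x) \<partial>\<mu>)"
      using nn_integral_eq_integral[of \<mu> "\<lambda>x. \<bar>x\<bar>"] i by simp
    with fin have "ennreal (integral\<^sup>L \<mu> (\<lambda>x. \<bar>x\<bar>)) \<le> ennreal (N + 1)" by simp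
    then have "integral\<^sup>L \<mu> (\<lambda>x. \<bar>x\<bar>) \<le> N + 1"
      by (subst (asm) ennreal_le_iff) (use N0' in auto)
    with i show "integrable \<mu> (\<lambda>x. x) \<and> integral\<^sup>L \<mu> (\<lambda>x. \<bar>x\<bar>) \<le> N + 1" by simp
  qed
  then show ?thesis by blast
qed

lemma ab_facts:
  assumes ne: "Th \<noteq> {}" and wc: "weakly_compact_prob_set Th" and H: "condH Th"
  shows "- NE Th (\<lambda>x. - x) \<le> NE Th (\<lambda>x. x)"
    and "\<forall>\<mu>\<in>Th. integrable \<mu> (\<lambda>x. x)"
proof -
  obtain B where B: "\<And>\<mu>. \<mu> \<in> Th \<Longrightarrow> integrable \<mu> (\<lambda>x. x) \<and> integral\<^sup>L \<mu> (\<lambda>x. \<bar>x\<bar>) \<le> B"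
    using condH_bound[OF wc H] by blast
  have ab: "\<bar>integral\<^sup>L \<mu> (\<lambda>x. x)\<bar> \<le> B" if "\<mu> \<in> Th" for \<mu>
    using order_trans[OF integral_abs_bound[of \<mu> "\<lambda>x::real. x"]] B[OF that] by blast
  have b1: "bdd_above ((\<lambda>\<mu>. integral\<^sup>L \<mu> (\<lambda>x. x)) ` Th)"
    using ab by (intro bdd_aboveI[where M=B]) (auto dest: abs_le_D1)
  have b2: "bdd_above ((\<lambda>\<mu>. integral\<^sup>L \<mu> (\<lambda>x. - x)) ` Th)"
    using ab by (intro bdd_aboveI[where M=B]) (auto dest: abs_le_D2)
  obtain \<mu> where mu: "\<mu> \<in> Th" using ne by blast
  have "integral\<^sup>L \<mu> (\<lambda>x. - x) \<le> NE Th (\<lambda>x. - x)"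
    unfolding NE_def by (rule cSUP_upper[OF mu b2])
  moreover have "integral\<^sup>L \<mu> (\<lambda>x. x) \<le> NE Th (\<lambda>x. x)"
    unfolding NE_def by (rule cSUP_upper[OF mu b1])
  moreover have "integral\<^sup>L \<mu> (\<lambda>x. - x) = - integral\<^sup>L \<mu> (\<lambda>x. x)" by simp
  ultimately show "- NE Th (\<lambda>x. - x) \<le> NE Th (\<lambda>x. x)" by linarith
  show "\<forall>\<mu>\<in>Th. integrable \<mu> (\<lambda>x. x)" using B by blast
qed

lemma p_formula:
  fixes a b c :: real
  assumes "a \<le> b"
  shows "(SUP y\<in>{a..b}. y * c) = max (a * c) (b * c)"
proof (cases "0 \<le> c")
  case True
  have "(SUP y\<in>{a..b}. y * c) = b * c"
    by (rule cSup_eq_maximum) (use assms True in \<open>auto intro: mult_right_mono\<close>)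
  then show ?thesis using True assms by (simp add: mult_right_mono max_def)
next
  case False
  have "(SUP y\<in>{a..b}. y * c) = a * c"
    by (rule cSup_eq_maximum) (use assms False in \<open>auto intro: mult_right_mono_neg\<close>)
  then show ?thesis using False assms by (simp add: mult_right_mono_neg max_def)
qed



lemma C_b_1I:
  fixes \<phi> d :: "real \<Rightarrow> real"
  assumes der: "\<And>x. (\<phi> has_real_derivative d x) (at x)" and c: "continuous_on UNIV d"
    and b1: "\<And>x. \<bar>\<phi> x\<bar> \<le> K" and b2: "\<And>x. \<bar>d x\<bar> \<le> K'"
  shows "\<phi> \<in> C_b_1" "deriv \<phi> = d"
proof -
  show dd: "deriv \<phi> = d" using DERIV_imp_deriv[OF der] by blast
  have "\<phi> differentiable at x" for x
    using der[of x] real_differentiable_def by blast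
  moreover have "bounded (range \<phi>)" using b1 unfolding bounded_iff by auto
  moreover have "bounded (range d)" using b2 unfolding bounded_iff by auto
  ultimately show "\<phi> \<in> C_b_1" using c by (simp add: C_b_1_def dd)
qed

lemma C_b_1D:
  fixes \<phi> :: "real \<Rightarrow> real"
  assumes "\<phi> \<in> C_b_1"
  shows "\<And>x. (\<phi> has_real_derivative deriv \<phi> x) (at x)" "continuous_on UNIV \<phi>"
    "continuous_on UNIV (deriv \<phi>)" "\<exists>K. \<forall>x. \<bar>\<phi> x\<bar> \<le> K" "\<exists>K. \<forall>x. \<bar>deriv \<phi> x\<bar> \<le> K"
    "\<phi> \<in> C_b_Lip"
proof -
  show der: "\<And>x. (\<phi> has_real_derivative deriv \<phi> x) (at x)"
    using assms unfolding C_b_1_def by (auto simp: DERIV_deriv_iff_real_differentiable)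
  show "continuous_on UNIV \<phi>"
    using der by (meson DERIV_isCont continuous_at_imp_continuous_on)
  show "continuous_on UNIV (deriv \<phi>)" using assms unfolding C_b_1_def by auto
  show K1: "\<exists>K. \<forall>x. \<bar>\<phi> x\<bar> \<le> K" using assms unfolding C_b_1_def bounded_iff by auto
  show "\<exists>K. \<forall>x. \<bar>deriv \<phi> x\<bar> \<le> K" using assms unfolding C_b_1_def bounded_iff by auto
  then obtain K where K: "\<And>x. \<bar>deriv \<phi> x\<bar> \<le> K" by blast
  have K0: "0 \<le> K" using K[of 0] by linarith
  have le: "\<bar>\<phi> y - \<phi> x\<bar> \<le> K * \<bar>y - x\<bar>" if xy: "x < y" for x y
  proof -
    obtain z where "x < z" "z < y" "\<phi> y - \<phi> x = (y - x) * deriv \<phi> z"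
      using MVT2[OF xy, of \<phi> "deriv \<phi>"] der by blast
    then have "\<bar>\<phi> y - \<phi> x\<bar> = \<bar>y - x\<bar> * \<bar>deriv \<phi> z\<bar>" by (simp add: abs_mult)
    also have "\<dots> \<le> \<bar>y - x\<bar> * K" by (rule mult_left_mono[OF K]) simp
    finally show ?thesis by (simp add: mult.commute)
  qed
  have "K-lipschitz_on UNIV \<phi>"
  proof (rule lipschitz_onI)
    fix x y :: real
    show "dist (\<phi> x) (\<phi> y) \<le> K * dist x y"
      using le[of x y] le[of y x] unfolding dist_real_def
      by (cases x y rule: linorder_cases) (auto simp: abs_minus_commute)
  qed (rule K0)
  then show "\<phi> \<in> C_b_Lip" using K1 unfolding C_b_Lip_def bounded_iff by auto
qed

lemma C_b_LipD:
  fixes \<psi> :: "real \<Rightarrow> real"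
  assumes "\<psi> \<in> C_b_Lip"
  shows "continuous_on UNIV \<psi>" "\<exists>K. \<forall>x. \<bar>\<psi> x\<bar> \<le> K"
  using assms unfolding C_b_Lip_def bounded_iff
  by (auto intro: lipschitz_on_continuous_on)

lemma trunc_lip: "\<bar>min 1 (max 0 (x::real)) - min 1 (max 0 y)\<bar> \<le> \<bar>x - y\<bar>"
  by (simp add: min_def max_def abs_if)

lemma trunc_Lip_b: "(\<lambda>x. min 1 (max 0 (x - b))) \<in> C_b_Lip"
proof -
  have "1-lipschitz_on UNIV (\<lambda>x. min 1 (max 0 (x - b)))"
    by (rule lipschitz_onI) (use trunc_lip[of "_ - b" "_ - b"] in \<open>auto simp: dist_real_def\<close>)
  moreover have "bounded (range (\<lambda>x. min 1 (max 0 (x - b))))"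
    unfolding bounded_iff by (intro exI[of _ 1]) auto
  ultimately show ?thesis unfolding C_b_Lip_def by auto
qed

lemma trunc_Lip_a: "(\<lambda>x. min 1 (max 0 (a - x))) \<in> C_b_Lip"
proof -
  have "1-lipschitz_on UNIV (\<lambda>x. min 1 (max 0 (a - x)))"
    by (rule lipschitz_onI) (use trunc_lip[of "a - _" "a - _"] in \<open>auto simp: dist_real_def abs_minus_commute\<close>)
  moreover have "bounded (range (\<lambda>x. min 1 (max 0 (a - x))))"
    unfolding bounded_iff by (intro exI[of _ 1]) auto
  ultimately show ?thesis unfolding C_b_Lip_def by auto
qed

lemma psi_bounds: "0 \<le> psi s" "psi s \<le> 1" "psi s = 0 \<longleftrightarrow> s \<le> 0"
proof -
  have p: "0 < 1 + (max 0 s)^2" by (smt (verit) zero_le_power2)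
  show "0 \<le> psi s" "psi s \<le> 1" unfolding psi_def using p by auto
  show "psi s = 0 \<longleftrightarrow> s \<le> 0" unfolding psi_def using p by (auto simp: max_def)
qed

lemma dpsi_bounds: "0 \<le> dpsi s" "dpsi s \<le> 1" "dpsi s = 0 \<longleftrightarrow> s \<le> 0"
proof -
  let ?t = "max 0 s"
  have t0: "0 \<le> ?t" by simp
  have pos1: "0 < 1 + ?t^2" by (smt (verit) zero_le_power2)
  then have pos: "0 < (1 + ?t^2)^2" by simp
  show "0 \<le> dpsi s" unfolding dpsi_def using t0 pos by simp
  have "2 * ?t \<le> 1 + ?t^2" using sum_squares_bound[of ?t 1] by (simp add: power2_eq_square)
  also have "\<dots> \<le> (1 + ?t^2)^2" using power_increasing[of 1 2 "1 + ?t^2"] by simp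
  finally show "dpsi s \<le> 1" unfolding dpsi_def using pos by simp
  show "dpsi s = 0 \<longleftrightarrow> s \<le> 0" unfolding dpsi_def using pos pos1 by (auto simp: max_def)
qed

lemma dpsi_cont: "continuous_on UNIV dpsi"
  unfolding dpsi_def
  by (intro continuous_intros) (auto, smt (verit) zero_le_power2)

lemma psi_cont: "continuous_on UNIV psi"
  using psi_deriv by (meson DERIV_isCont continuous_at_imp_continuous_on)

lemma phib: "(\<lambda>x. psi (x - b)) \<in> C_b_1" "deriv (\<lambda>x. psi (x - b)) = (\<lambda>x. dpsi (x - b))"
proof -
  have d: "((\<lambda>x. psi (x - b)) has_real_derivative dpsi (x - b)) (at x)" for x
    using DERIV_chain2[OF psi_deriv, of "\<lambda>x. x - b" 1 x]
    by (simp add: DERIV_diff[OF DERIV_ident DERIV_const, simplified])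
  have c: "continuous_on UNIV (\<lambda>x. dpsi (x - b))"
    by (rule continuous_on_compose2[OF dpsi_cont]) (auto intro!: continuous_intros)
  show "(\<lambda>x. psi (x - b)) \<in> C_b_1" "deriv (\<lambda>x. psi (x - b)) = (\<lambda>x. dpsi (x - b))"
    using C_b_1I[OF d c, of 1 1] psi_bounds dpsi_bounds by auto
qed

lemma phia: "(\<lambda>x. psi (a - x)) \<in> C_b_1" "deriv (\<lambda>x. psi (a - x)) = (\<lambda>x. - dpsi (a - x))"
proof -
  have d: "((\<lambda>x. psi (a - x)) has_real_derivative - dpsi (a - x)) (at x)" for x
    using DERIV_chain2[OF psi_deriv, of "\<lambda>x. a - x" "-1" x]
    by (simp add: DERIV_diff[OF DERIV_const DERIV_ident, simplified])
  have c: "continuous_on UNIV (\<lambda>x. - dpsi (a - x))"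
    by (intro continuous_intros continuous_on_compose2[OF dpsi_cont]) (auto intro!: continuous_intros)
  show "(\<lambda>x. psi (a - x)) \<in> C_b_1" "deriv (\<lambda>x. psi (a - x)) = (\<lambda>x. - dpsi (a - x))"
    using C_b_1I[OF d c, of 1 1] psi_bounds dpsi_bounds by auto
qed

lemma phiy: "(\<lambda>x. 1 / (1 + (x - y)^2)) \<in> C_b_1"
   "deriv (\<lambda>x. 1 / (1 + (x - y)^2)) = (\<lambda>x. - 2 * (x - y) / (1 + (x - y)^2)^2)"
proof -
  have pos: "0 < 1 + (x - y)^2" for x :: real by (simp add: add_pos_nonneg)
  have d: "((\<lambda>x. 1 / (1 + (x - y)^2)) has_real_derivative - 2 * (x - y) / (1 + (x - y)^2)^2) (at x)" for x
    using pos[of x]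
    by (auto intro!: derivative_eq_intros simp: power2_eq_square field_simps)
  have c: "continuous_on UNIV (\<lambda>x. - 2 * (x - y) / (1 + (x - y)^2)^2)"
    using pos by (intro continuous_intros) (auto, smt (verit) zero_le_power2)
  have b1: "\<bar>1 / (1 + (x - y)^2)\<bar> \<le> 1" for x using pos[of x] by simp
  have b2: "\<bar>- 2 * (x - y) / (1 + (x - y)^2)^2\<bar> \<le> 1" for x
  proof -
    let ?t = "\<bar>x - y\<bar>"
    have "2 * ?t \<le> 1 + (x - y)^2" using sum_squares_bound[of ?t 1] by (simp add: power2_eq_square)
    also have "\<dots> \<le> (1 + (x - y)^2)^2" using power_increasing[of 1 2 "1 + (x - y)^2"] by simp
    finally have h: "2 * ?t \<le> (1 + (x - y)^2)^2" .
    have "\<bar>- 2 * (x - y)\<bar> \<le> (1 + (x - y)^2)^2" using h by (smt (verit))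
    then show ?thesis using pos[of x] by (simp add: abs_divide del: mult_minus_left)
  qed
  show "(\<lambda>x. 1 / (1 + (x - y)^2)) \<in> C_b_1"
    "deriv (\<lambda>x. 1 / (1 + (x - y)^2)) = (\<lambda>x. - 2 * (x - y) / (1 + (x - y)^2)^2)"
    using C_b_1I[OF d c b1 b2] by auto
qed



lemma endpoint:
  fixes \<phi> :: "real \<Rightarrow> real"
  assumes ab: "a \<le> b" and x1: "a \<le> \<xi>" and x2: "\<xi> \<le> b"
    and der: "(\<phi> has_real_derivative c) (at \<xi>)"
    and mx: "\<And>y. a \<le> y \<Longrightarrow> y \<le> b \<Longrightarrow> \<phi> y \<le> \<phi> \<xi>"
  shows "max (a * c) (b * c) - \<xi> * c = 0"
proof (cases "a = b")
  case True
  then show ?thesis using x1 x2 by simp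
next
  case False
  then have ab': "a < b" using ab by simp
  consider "a < \<xi> \<and> \<xi> < b" | "\<xi> = b" | "\<xi> = a" using x1 x2 by linarith
  then show ?thesis
  proof cases
    case 1
    have "c = 0"
    proof (rule DERIV_local_max[OF der, of "min (\<xi> - a) (b - \<xi>)"])
      show "0 < min (\<xi> - a) (b - \<xi>)" using 1 by simp
      show "\<forall>y. \<bar>\<xi> - y\<bar> < min (\<xi> - a) (b - \<xi>) \<longrightarrow> \<phi> y \<le> \<phi> \<xi>"
        using mx by (auto simp: abs_less_iff)
    qed
    then show ?thesis by simp
  next
    case 2
    have c0: "0 \<le> c"
    proof (rule ccontr)
      assume "\<not> 0 \<le> c"
      then obtain d where d: "d > 0" "\<And>h. h > 0 \<Longrightarrow> h < d \<Longrightarrow> \<phi> \<xi> < \<phi> (\<xi> - h)"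
        using DERIV_neg_dec_left[OF der] by force
      define h where "h = min (d / 2) (b - a)"
      have "\<phi> \<xi> < \<phi> (\<xi> - h)" using d ab' by (intro d(2)) (auto simp: h_def)
      moreover have "\<phi> (\<xi> - h) \<le> \<phi> \<xi>" using 2 d ab' by (intro mx) (auto simp: h_def)
      ultimately show False by simp
    qed
    have "a * c \<le> b * c" using ab c0 by (simp add: mult_right_mono)
    then show ?thesis using 2 by simp
  next
    case 3
    have c0: "c \<le> 0"
    proof (rule ccontr)
      assume "\<not> c \<le> 0"
      then obtain d where d: "d > 0" "\<And>h. h > 0 \<Longrightarrow> h < d \<Longrightarrow> \<phi> \<xi> < \<phi> (\<xi> + h)"
        using DERIV_pos_inc_right[OF der] by force
      define h where "h = min (d / 2) (b - a)"
      have "\<phi> \<xi> < \<phi> (\<xi> + h)" using d ab' by (intro d(2)) (auto simp: h_def)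
      moreover have "\<phi> (\<xi> + h) \<le> \<phi> \<xi>" using 3 d ab' by (intro mx) (auto simp: h_def)
      ultimately show False by simp
    qed
    have "b * c \<le> a * c" using ab c0 by (simp add: mult_right_mono_neg)
    then show ?thesis using 3 by simp
  qed
qed

lemma delta_int:
  fixes a b y \<xi> :: real
  assumes "a \<le> y" "y \<le> b"
  defines "c \<equiv> - 2 * (\<xi> - y) / (1 + (\<xi> - y)^2)^2"
  shows "0 \<le> max (a * c) (b * c) - \<xi> * c"
    "max (a * c) (b * c) - \<xi> * c = 0 \<Longrightarrow> \<xi> = y"
proof -
  define k where "k = 2 / (1 + (\<xi> - y)^2)^2"
  have p1: "0 < 1 + (\<xi> - y)^2" by (smt (verit) zero_le_power2)
  have k: "0 < k" unfolding k_def using p1 by simp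
  have ck: "c = k * (y - \<xi>)" unfolding c_def k_def by (simp add: field_simps)
  have "0 < max (a * c) (b * c) - \<xi> * c" if "\<xi> \<noteq> y"
  proof (cases "\<xi> > y")
    case True
    have "c < 0" unfolding ck using k True by (simp add: mult_pos_neg)
    moreover have "a - \<xi> < 0" using True assms by simp
    ultimately have "0 < (a - \<xi>) * c" by (simp add: mult_neg_neg)
    then show ?thesis by (simp add: algebra_simps max_def)
  next
    case False
    then have F: "\<xi> < y" using that by simp
    have "0 < c" unfolding ck using k F by simp
    moreover have "0 < b - \<xi>" using F assms by simp
    ultimately have "0 < (b - \<xi>) * c" by simp
    then show ?thesis by (simp add: algebra_simps max_def)
  qed
  moreover have "max (a * c) (b * c) - \<xi> * c = 0" if "\<xi> = y" using that ck by simp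
  ultimately show "0 \<le> max (a * c) (b * c) - \<xi> * c"
    "max (a * c) (b * c) - \<xi> * c = 0 \<Longrightarrow> \<xi> = y"
    by (cases "\<xi> = y"; force)+
qed

lemma supp_b_int:
  fixes a b \<xi> :: real
  assumes "a \<le> b"
  shows "max (a * dpsi (\<xi> - b)) (b * dpsi (\<xi> - b)) - \<xi> * dpsi (\<xi> - b) \<le> 0"
    "max (a * dpsi (\<xi> - b)) (b * dpsi (\<xi> - b)) - \<xi> * dpsi (\<xi> - b) = 0 \<Longrightarrow> \<xi> \<le> b"
proof -
  let ?c = "dpsi (\<xi> - b)"
  have c0: "0 \<le> ?c" by (rule dpsi_bounds)
  have m: "max (a * ?c) (b * ?c) = b * ?c" using assms c0 by (simp add: mult_right_mono max_def)
  show "max (a * ?c) (b * ?c) - \<xi> * ?c \<le> 0"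
  proof (cases "\<xi> \<le> b")
    case True
    then have "?c = 0" using dpsi_bounds(3) by simp
    then show ?thesis by simp
  next
    case False
    then have "0 < ?c" using dpsi_bounds(3)[of "\<xi> - b"] c0 by simp
    then have "(b - \<xi>) * ?c < 0" using False by (simp add: mult_neg_pos)
    then show ?thesis using m by (simp add: algebra_simps)
  qed
  show "max (a * ?c) (b * ?c) - \<xi> * ?c = 0 \<Longrightarrow> \<xi> \<le> b"
  proof (rule ccontr)
    assume e: "max (a * ?c) (b * ?c) - \<xi> * ?c = 0" and n: "\<not> \<xi> \<le> b"
    then have "0 < ?c" using dpsi_bounds(3)[of "\<xi> - b"] c0 by simp
    then have "(b - \<xi>) * ?c < 0" using n by (simp add: mult_neg_pos)
    then show False using m e by (simp add: algebra_simps)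
  qed
qed

lemma supp_a_int:
  fixes a b \<xi> :: real
  assumes "a \<le> b"
  shows "max (a * - dpsi (a - \<xi>)) (b * - dpsi (a - \<xi>)) - \<xi> * - dpsi (a - \<xi>) \<le> 0"
    "max (a * - dpsi (a - \<xi>)) (b * - dpsi (a - \<xi>)) - \<xi> * - dpsi (a - \<xi>) = 0 \<Longrightarrow> a \<le> \<xi>"
proof -
  let ?d = "dpsi (a - \<xi>)"
  have c0: "0 \<le> ?d" by (rule dpsi_bounds)
  have "b * - ?d \<le> a * - ?d" using assms c0 by (intro mult_right_mono_neg) auto
  then have m: "max (a * - ?d) (b * - ?d) = a * - ?d" by (simp add: max_def)
  show "max (a * - ?d) (b * - ?d) - \<xi> * - ?d \<le> 0"
  proof (cases "a \<le> \<xi>")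
    case True
    then have "?d = 0" using dpsi_bounds(3) by simp
    then show ?thesis by simp
  next
    case False
    then have "0 < ?d" using dpsi_bounds(3)[of "a - \<xi>"] c0 by simp
    then have "(\<xi> - a) * ?d < 0" using False by (simp add: mult_neg_pos)
    then show ?thesis using m by (simp add: algebra_simps)
  qed
  show "max (a * - ?d) (b * - ?d) - \<xi> * - ?d = 0 \<Longrightarrow> a \<le> \<xi>"
  proof (rule ccontr)
    assume e: "max (a * - ?d) (b * - ?d) - \<xi> * - ?d = 0" and n: "\<not> a \<le> \<xi>"
    then have "0 < ?d" using dpsi_bounds(3)[of "a - \<xi>"] c0 by simp
    then have "(\<xi> - a) * ?d < 0" using n by (simp add: mult_neg_pos)
    then show False using m e by (simp add: algebra_simps)
  qed
qed

lemma integrand_int: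
  fixes d :: "real \<Rightarrow> real"
  assumes wc: "weakly_compact_prob_set Th" and mu: "\<mu> \<in> Th"
    and ix: "integrable \<mu> (\<lambda>x. x)" and c: "continuous_on UNIV d" and K: "\<And>x. \<bar>d x\<bar> \<le> K"
  shows "integrable \<mu> (\<lambda>x. max (a * d x) (b * d x) - x * d x)"
proof -
  interpret prob_space \<mu> using wc_prob[OF wc mu] .
  have i: "integrable \<mu> (\<lambda>x. (\<bar>a\<bar> + \<bar>b\<bar>) * K + K * \<bar>x\<bar>)"
    using Bochner_Integration.integrable_add[OF integrable_const integrable_mult_right[OF integrable_abs[OF ix]]] .
  show ?thesis
  proof (rule Bochner_Integration.integrable_bound[OF i])
    show "(\<lambda>x. max (a * d x) (b * d x) - x * d x) \<in> borel_measurable \<mu>"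
      by (rule wc_meas[OF wc mu]) (intro continuous_intros c)
    show "AE x in \<mu>. norm (max (a * d x) (b * d x) - x * d x) \<le> norm ((\<bar>a\<bar> + \<bar>b\<bar>) * K + K * \<bar>x\<bar>)"
    proof (rule AE_I2)
      fix x
      have K0: "0 \<le> K" using K[of 0] by linarith
      have h1: "\<bar>a * d x\<bar> \<le> \<bar>a\<bar> * K" by (simp add: abs_mult mult_left_mono K)
      have h2: "\<bar>b * d x\<bar> \<le> \<bar>b\<bar> * K" by (simp add: abs_mult mult_left_mono K)
      have "\<bar>x\<bar> * \<bar>d x\<bar> \<le> \<bar>x\<bar> * K" by (simp add: mult_left_mono K)
      then have h3: "\<bar>x * d x\<bar> \<le> K * \<bar>x\<bar>" by (simp add: abs_mult mult.commute)
      have nn: "0 \<le> (\<bar>a\<bar> + \<bar>b\<bar>) * K + K * \<bar>x\<bar>" using K0 by simp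
      show "norm (max (a * d x) (b * d x) - x * d x) \<le> norm ((\<bar>a\<bar> + \<bar>b\<bar>) * K + K * \<bar>x\<bar>)"
        using h1 h2 h3 nn by (simp add: max_def distrib_right) linarith
    qed
  qed
qed



theorem proposition6p1:
  fixes Th :: "real measure set"
  assumes "Th \<noteq> {}"
    and "weakly_compact_prob_set Th"
    and "condH Th"
  defines "mu_lo \<equiv> - NE Th (\<lambda>x. - x)"
    and "mu_up \<equiv> NE Th (\<lambda>x. x)"
    and "p \<equiv> (\<lambda>a::real. SUP y\<in>{- NE Th (\<lambda>x. - x) .. NE Th (\<lambda>x. x)}. y * a)"
  shows "(\<forall>\<phi>\<in>C_b_Lip. NE Th \<phi> = (SUP y\<in>{mu_lo..mu_up}. \<phi> y)) \<longleftrightarrow>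
         (\<forall>\<phi>\<in>C_b_1. \<forall>\<mu>\<in>Theta_opt Th \<phi>.
            (\<integral>x. (p (deriv \<phi> x) - x * deriv \<phi> x) \<partial>\<mu>) = 0)"
proof -
  note ne = assms(1) and wc = assms(2)
  have ab: "mu_lo \<le> mu_up" using ab_facts(1)[OF assms(1-3)] by (simp add: mu_lo_def mu_up_def)
  have xint: "\<And>\<mu>. \<mu> \<in> Th \<Longrightarrow> integrable \<mu> (\<lambda>x. x)" using ab_facts(2)[OF assms(1-3)] by blast
  have pf: "\<And>c. p c = max (mu_lo * c) (mu_up * c)"
    unfolding p_def using p_formula[OF ab[unfolded mu_lo_def mu_up_def]] by (simp add: mu_lo_def mu_up_def)
  have ne_ab: "{mu_lo..mu_up} \<noteq> {}" using ab by simp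
  show ?thesis
  proof
    assume L: "\<forall>\<phi>\<in>C_b_Lip. NE Th \<phi> = (SUP y\<in>{mu_lo..mu_up}. \<phi> y)"
    have supp_gen: "AE x in \<nu>. \<psi> x = 0"
      if nu: "\<nu> \<in> Th" and psi: "\<psi> \<in> C_b_Lip" and c: "continuous_on UNIV \<psi>"
        and b: "\<And>x. \<bar>\<psi> x\<bar> \<le> 1" and nn: "\<And>x. 0 \<le> \<psi> x"
        and z: "\<And>y. mu_lo \<le> y \<Longrightarrow> y \<le> mu_up \<Longrightarrow> \<psi> y = 0" for \<nu> \<psi>
    proof -
      have "NE Th \<psi> = (SUP y\<in>{mu_lo..mu_up}. \<psi> y)" using L psi by blast
      also have "\<dots> = (SUP y\<in>{mu_lo..mu_up}. 0)" using z by (intro SUP_cong) auto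
      also have "\<dots> = 0" using ne_ab by simp
      finally have NE0: "NE Th \<psi> = 0" .
      have int: "integrable \<nu> \<psi>" using wc_int_bound(1)[OF wc nu c b] .
      have "integral\<^sup>L \<nu> \<psi> \<le> 0" using wc_NE_ge[OF wc c b nu] NE0 by simp
      moreover have "0 \<le> integral\<^sup>L \<nu> \<psi>" using nn by (simp add: integral_nonneg)
      ultimately have "integral\<^sup>L \<nu> \<psi> = 0" by simp
      then show ?thesis using integral_nonneg_eq_0_iff_AE[OF int] nn by simp
    qed
    have suppb: "AE x in \<nu>. x \<le> mu_up" if nu: "\<nu> \<in> Th" for \<nu>
    proof -
      have "AE x in \<nu>. min 1 (max 0 (x - mu_up)) = 0"
        by (rule supp_gen[OF nu trunc_Lip_b]) (auto intro!: continuous_intros)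
      then show ?thesis by eventually_elim (auto simp: min_def max_def split: if_splits)
    qed
    have suppa: "AE x in \<nu>. mu_lo \<le> x" if nu: "\<nu> \<in> Th" for \<nu>
    proof -
      have "AE x in \<nu>. min 1 (max 0 (mu_lo - x)) = 0"
        by (rule supp_gen[OF nu trunc_Lip_a]) (auto intro!: continuous_intros)
      then show ?thesis by eventually_elim (auto simp: min_def max_def split: if_splits)
    qed
    show "\<forall>\<phi>\<in>C_b_1. \<forall>\<mu>\<in>Theta_opt Th \<phi>. (\<integral>x. (p (deriv \<phi> x) - x * deriv \<phi> x) \<partial>\<mu>) = 0"
    proof (intro ballI)
      fix \<phi> \<mu> assume phi: "\<phi> \<in> C_b_1" and mu: "\<mu> \<in> Theta_opt Th \<phi>"
      have muTh: "\<mu> \<in> Th" and eq: "integral\<^sup>L \<mu> \<phi> = NE Th \<phi>" using mu unfolding Theta_opt_def by auto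
      interpret prob_space \<mu> using wc_prob[OF wc muTh] .
      note DD = C_b_1D[OF phi]
      obtain K where K: "\<And>x. \<bar>\<phi> x\<bar> \<le> K" using DD(4) by blast
      define M where "M = (SUP y\<in>{mu_lo..mu_up}. \<phi> y)"
      have NEM: "NE Th \<phi> = M" using L DD(6) unfolding M_def by blast
      have bddphi: "bdd_above (\<phi> ` {mu_lo..mu_up})"
        using K by (intro bdd_aboveI2[where M=K]) (auto dest: abs_le_D1)
      have le: "\<phi> y \<le> M" if "mu_lo \<le> y" "y \<le> mu_up" for y
        unfolding M_def using that by (intro cSUP_upper[OF _ bddphi]) auto
      have AEin: "AE x in \<mu>. mu_lo \<le> x \<and> x \<le> mu_up"
        using suppa[OF muTh] suppb[OF muTh] by eventually_elim auto
      have intphi: "integrable \<mu> \<phi>" using wc_int_bound(1)[OF wc muTh DD(2) K] .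
      have gint: "integrable \<mu> (\<lambda>x. M - \<phi> x)" using intphi by simp
      have gnn: "AE x in \<mu>. 0 \<le> M - \<phi> x" using AEin by eventually_elim (auto dest: le)
      have "integral\<^sup>L \<mu> (\<lambda>x. M - \<phi> x) = M - integral\<^sup>L \<mu> \<phi>"
        using intphi by (simp add: prob_space)
      also have "\<dots> = 0" using eq NEM by simp
      finally have "AE x in \<mu>. M - \<phi> x = 0" using integral_nonneg_eq_0_iff_AE[OF gint gnn] by simp
      with AEin have "AE x in \<mu>. p (deriv \<phi> x) - x * deriv \<phi> x = 0"
      proof eventually_elim
        case (elim x)
        have "max (mu_lo * deriv \<phi> x) (mu_up * deriv \<phi> x) - x * deriv \<phi> x = 0"
        proof (rule endpoint[OF ab _ _ DD(1)])
          show "mu_lo \<le> x" "x \<le> mu_up" using elim by auto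
          show "\<phi> y \<le> \<phi> x" if "mu_lo \<le> y" "y \<le> mu_up" for y using le[OF that] elim by simp
        qed
        then show ?case by (simp add: pf)
      qed
      then show "(\<integral>x. (p (deriv \<phi> x) - x * deriv \<phi> x) \<partial>\<mu>) = 0" by (rule integral_eq_zero_AE)
    qed
  next
    assume R: "\<forall>\<phi>\<in>C_b_1. \<forall>\<mu>\<in>Theta_opt Th \<phi>. (\<integral>x. (p (deriv \<phi> x) - x * deriv \<phi> x) \<partial>\<mu>) = 0"
    have Rmax: "\<exists>\<mu>\<in>Th. integral\<^sup>L \<mu> \<phi> = NE Th \<phi> \<and>
        (\<integral>x. (max (mu_lo * deriv \<phi> x) (mu_up * deriv \<phi> x) - x * deriv \<phi> x) \<partial>\<mu>) = 0"
      if phi: "\<phi> \<in> C_b_1" for \<phi>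
    proof -
      note DD = C_b_1D[OF phi]
      obtain K where K: "\<And>x. \<bar>\<phi> x\<bar> \<le> K" using DD(4) by blast
      obtain \<mu> where mu: "\<mu> \<in> Th" "integral\<^sup>L \<mu> \<phi> = NE Th \<phi>" using wc_max[OF ne wc DD(2) K] by blast
      then have "\<mu> \<in> Theta_opt Th \<phi>" unfolding Theta_opt_def by simp
      then have "(\<integral>x. (p (deriv \<phi> x) - x * deriv \<phi> x) \<partial>\<mu>) = 0" using R phi by blast
      then show ?thesis using mu by (auto simp: pf)
    qed
    have zero_AE: "AE x in \<mu>. f x = 0"
      if "integrable \<mu> f" "\<And>x. 0 \<le> f x" "integral\<^sup>L \<mu> f = 0" for \<mu> and f :: "real \<Rightarrow> real"
      using integral_nonneg_eq_0_iff_AE[OF that(1)] that(2,3) by simp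
    have psib: "\<And>x. \<bar>psi x\<bar> \<le> 1" by (smt (verit) psi_bounds)
    have dpsib: "\<And>x. \<bar>dpsi x\<bar> \<le> 1" using dpsi_bounds by (smt (verit) dpsi_bounds)
    have from_NE0: "AE x in \<nu>. \<phi> x = 0"
      if nu: "\<nu> \<in> Th" and c: "continuous_on UNIV \<phi>" and b: "\<And>x. \<bar>\<phi> x\<bar> \<le> 1"
        and nn: "\<And>x. 0 \<le> \<phi> x" and NE0: "NE Th \<phi> = 0" for \<nu> \<phi>
    proof -
      have int: "integrable \<nu> \<phi>" using wc_int_bound(1)[OF wc nu c b] .
      have "integral\<^sup>L \<nu> \<phi> \<le> 0" using wc_NE_ge[OF wc c b nu] NE0 by simp
      moreover have "0 \<le> integral\<^sup>L \<nu> \<phi>" using nn by (simp add: integral_nonneg)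
      ultimately show ?thesis using zero_AE[OF int nn] by simp
    qed
    have suppb: "AE x in \<nu>. x \<le> mu_up" if nu: "\<nu> \<in> Th" for \<nu>
    proof -
      let ?\<phi> = "\<lambda>x. psi (x - mu_up)"
      let ?J = "\<lambda>x. max (mu_lo * dpsi (x - mu_up)) (mu_up * dpsi (x - mu_up)) - x * dpsi (x - mu_up)"
      obtain \<mu> where mu: "\<mu> \<in> Th" "integral\<^sup>L \<mu> ?\<phi> = NE Th ?\<phi>" "integral\<^sup>L \<mu> ?J = 0"
        using Rmax[OF phib(1)] unfolding phib(2) by blast
      have cd: "continuous_on UNIV (\<lambda>x. dpsi (x - mu_up))"
        using C_b_1D(3)[OF phib(1)] unfolding phib(2) .
      have cphi: "continuous_on UNIV ?\<phi>" using C_b_1D(2)[OF phib(1)] .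
      have Jint: "integrable \<mu> ?J" by (rule integrand_int[OF wc mu(1) xint[OF mu(1)] cd dpsib])
      have nJint: "integrable \<mu> (\<lambda>x. - ?J x)" using integrable_minus[OF Jint] .
      have "AE x in \<mu>. - ?J x = 0"
      proof (rule zero_AE[OF nJint])
        show "0 \<le> - ?J x" for x using supp_b_int(1)[OF ab, of x] by linarith
        have "integral\<^sup>L \<mu> (\<lambda>x. - ?J x) = - integral\<^sup>L \<mu> ?J" by (rule integral_minus)
        then show "integral\<^sup>L \<mu> (\<lambda>x. - ?J x) = 0" using mu(3) by simp
      qed
      then have "AE x in \<mu>. ?\<phi> x = 0"
        by eventually_elim (use supp_b_int(2)[OF ab] psi_bounds(3) in auto)
      then have "integral\<^sup>L \<mu> ?\<phi> = 0" by (rule integral_eq_zero_AE)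
      then have "NE Th ?\<phi> = 0" using mu(2) by simp
      then have "AE x in \<nu>. ?\<phi> x = 0"
        by (intro from_NE0[OF nu cphi]) (use psib psi_bounds in auto)
      then show ?thesis by eventually_elim (use psi_bounds(3) in auto)
    qed
    have suppa: "AE x in \<nu>. mu_lo \<le> x" if nu: "\<nu> \<in> Th" for \<nu>
    proof -
      let ?\<phi> = "\<lambda>x. psi (mu_lo - x)"
      let ?J = "\<lambda>x. max (mu_lo * - dpsi (mu_lo - x)) (mu_up * - dpsi (mu_lo - x)) - x * - dpsi (mu_lo - x)"
      obtain \<mu> where mu: "\<mu> \<in> Th" "integral\<^sup>L \<mu> ?\<phi> = NE Th ?\<phi>" "integral\<^sup>L \<mu> ?J = 0"
        using Rmax[OF phia(1)] unfolding phia(2) by blast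
      have cd: "continuous_on UNIV (\<lambda>x. - dpsi (mu_lo - x))"
        using C_b_1D(3)[OF phia(1)] unfolding phia(2) .
      have cphi: "continuous_on UNIV ?\<phi>" using C_b_1D(2)[OF phia(1)] .
      have Jint: "integrable \<mu> ?J"
        by (rule integrand_int[OF wc mu(1) xint[OF mu(1)] cd, of 1]) (use dpsib in simp)
      have nJint: "integrable \<mu> (\<lambda>x. - ?J x)" using integrable_minus[OF Jint] .
      have "AE x in \<mu>. - ?J x = 0"
      proof (rule zero_AE[OF nJint])
        show "0 \<le> - ?J x" for x using supp_a_int(1)[OF ab, of x] by linarith
        have "integral\<^sup>L \<mu> (\<lambda>x. - ?J x) = - integral\<^sup>L \<mu> ?J" by (rule integral_minus)
        then show "integral\<^sup>L \<mu> (\<lambda>x. - ?J x) = 0" using mu(3) by simp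
      qed
      then have "AE x in \<mu>. ?\<phi> x = 0"
        by eventually_elim (use supp_a_int(2)[OF ab] psi_bounds(3) in auto)
      then have "integral\<^sup>L \<mu> ?\<phi> = 0" by (rule integral_eq_zero_AE)
      then have "NE Th ?\<phi> = 0" using mu(2) by simp
      then have "AE x in \<nu>. ?\<phi> x = 0"
        by (intro from_NE0[OF nu cphi]) (use psib psi_bounds in auto)
      then show ?thesis by eventually_elim (use psi_bounds(3) in auto)
    qed
    have delta: "\<exists>\<mu>\<in>Th. AE x in \<mu>. x = y" if y: "mu_lo \<le> y" "y \<le> mu_up" for y
    proof -
      let ?\<phi> = "\<lambda>x. 1 / (1 + (x - y)^2)"
      let ?c = "\<lambda>x. - 2 * (x - y) / (1 + (x - y)^2)^2"
      let ?J = "\<lambda>x. max (mu_lo * ?c x) (mu_up * ?c x) - x * ?c x"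
      obtain \<mu> where mu: "\<mu> \<in> Th" "integral\<^sup>L \<mu> ?J = 0"
        using Rmax[OF phiy(1)] unfolding phiy(2) by blast
      have cd: "continuous_on UNIV ?c"
        using C_b_1D(3)[OF phiy(1)] unfolding phiy(2) .
      obtain K where K: "\<And>x. \<bar>?c x\<bar> \<le> K"
        using C_b_1D(5)[OF phiy(1)] unfolding phiy(2) by blast
      have Jint: "integrable \<mu> ?J" by (rule integrand_int[OF wc mu(1) xint[OF mu(1)] cd K])
      have "AE x in \<mu>. ?J x = 0"
        by (rule zero_AE) (use Jint mu(2) delta_int(1)[OF y] in auto)
      then have "AE x in \<mu>. x = y"
        by eventually_elim (use delta_int(2)[OF y] in auto)
      then show ?thesis using mu(1) by blast
    qed
    show "\<forall>\<psi>\<in>C_b_Lip. NE Th \<psi> = (SUP y\<in>{mu_lo..mu_up}. \<psi> y)"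
    proof
      fix \<psi> assume psi: "\<psi> \<in> C_b_Lip"
      have c: "continuous_on UNIV \<psi>" using C_b_LipD(1)[OF psi] .
      obtain K where K: "\<And>x. \<bar>\<psi> x\<bar> \<le> K" using C_b_LipD(2)[OF psi] by blast
      have bdd: "bdd_above (\<psi> ` {mu_lo..mu_up})"
        using K by (intro bdd_aboveI2[where M=K]) (auto dest: abs_le_D1)
      define S where "S = (SUP y\<in>{mu_lo..mu_up}. \<psi> y)"
      have le: "\<psi> y \<le> S" if "mu_lo \<le> y" "y \<le> mu_up" for y
        unfolding S_def using that by (intro cSUP_upper[OF _ bdd]) auto
      show "NE Th \<psi> = S"
      proof (rule antisym)
        show "NE Th \<psi> \<le> S" unfolding NE_def
        proof (rule cSUP_least[OF ne])
          fix \<nu> assume nu: "\<nu> \<in> Th"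
          interpret prob_space \<nu> using wc_prob[OF wc nu] .
          have "AE x in \<nu>. \<psi> x \<le> S"
            using suppa[OF nu] suppb[OF nu] by eventually_elim (auto intro: le)
          then have "integral\<^sup>L \<nu> \<psi> \<le> integral\<^sup>L \<nu> (\<lambda>x. S)"
            by (intro integral_mono_AE wc_int_bound(1)[OF wc nu c K]) auto
          then show "integral\<^sup>L \<nu> \<psi> \<le> S" by (simp add: prob_space)
        qed
        show "S \<le> NE Th \<psi>" unfolding S_def
        proof (rule cSUP_least[OF ne_ab])
          fix y assume "y \<in> {mu_lo..mu_up}"
          then obtain \<mu> where mu: "\<mu> \<in> Th" "AE x in \<mu>. x = y" using delta by auto
          interpret prob_space \<mu> using wc_prob[OF wc mu(1)] .
          have "integral\<^sup>L \<mu> \<psi> = integral\<^sup>L \<mu> (\<lambda>x. \<psi> y)"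
            by (rule integral_cong_AE) (use wc_meas[OF wc mu(1) c] mu(2) in auto)
          also have "\<dots> = \<psi> y" by (simp add: prob_space)
          finally show "\<psi> y \<le> NE Th \<psi>" using wc_NE_ge[OF wc c K mu(1)] by simp
        qed
      qed
    qed
  qed
qed

end
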